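(* Fix any $\lambda\in[0,\infty)$ and $i\in[n]$. If $\ell(z_i,\cdot)$ is differentiable and $m(P_{-i},\cdot,\lambda)$ has $\nu(r)=c_mr^q$ gradient growth for some $c_m>0$ and $q>0$, then $$\|\hat\beta(\lambda)-\hat\beta_{-i}(\lambda)\|_2^{q-1}\le\frac1n\frac1{c_m}\|\nabla_\beta\ell(z_i,\hat\beta(\lambda))\|_2.$$
   Context: Data $z_1,\dots,z_n\in\mathcal Z$; loss $\ell:\mathcal Z\times\mathbb{R}^d\to\mathbb{R}$, regularizer $\pi:\mathbb{R}^d\to\mathbb{R}$. $\ell(\mu,\beta):=\int\ell(z,\beta)d\mu(z)$, $m(\mu,\beta,\lambda):=\ell(\mu,\beta)+\lambda\pi(\beta)$; $P_n:=\frac1n\sum_i\delta_{z_i}$, $P_{-i}:=\frac1n\sum_{j\ne i}\delta_{z_j}$. $\hat\beta(\lambda):=\arg\min_\beta m(P_n,\beta,\lambda)$, $\hat\beta_{-i}(\lambda):=\arg\min_\beta m(P_{-i},\beta,\lambda)$. A function $\varphi$ has $\nu$ gradient growth if it is subdifferentiable and $\nu(\|x-y\|_2)\le\langle y-x,u-v\rangle$ for all $x,y\in\mathbb{R}^d$ and all $u\in\partial\varphi(y)$, $v\in\partial\varphi(x)$. *)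

theory Defs
  imports "HOL-Analysis.Analysis"
begin

definition subdiff :: "('b::real_inner \<Rightarrow> real) \<Rightarrow> 'b \<Rightarrow> 'b set" where
  "subdiff \<phi> y = {u. \<forall>x. \<phi> x \<ge> \<phi> y + inner u (x - y)}"

definition subdifferentiable :: "('b::real_inner \<Rightarrow> real) \<Rightarrow> bool" where
  "subdifferentiable \<phi> \<longleftrightarrow> (\<forall>x. subdiff \<phi> x \<noteq> {})"

definition gradient_growth :: "(real \<Rightarrow> real) \<Rightarrow> ('b::real_inner \<Rightarrow> real) \<Rightarrow> bool" where
  "gradient_growth \<nu> \<phi> \<longleftrightarrow> subdifferentiable \<phi> \<and>
     (\<forall>x y u v. u \<in> subdiff \<phi> y \<longrightarrow> v \<in> subdiff \<phi> x \<longrightarrow> \<nu> (norm (x - y)) \<le> inner (y - x) (u - v))"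

definition m_full :: "('z \<Rightarrow> 'b \<Rightarrow> real) \<Rightarrow> ('b \<Rightarrow> real) \<Rightarrow> (nat \<Rightarrow> 'z) \<Rightarrow> nat \<Rightarrow> 'b \<Rightarrow> real \<Rightarrow> real" where
  "m_full loss pen z n \<beta> lam = (1 / real n) * (\<Sum>j\<in>{1..n}. loss (z j) \<beta>) + lam * pen \<beta>"

text \<open>Leave-one-out risk m(P_{-i}, beta, lambda); note P_{-i} has weights 1/n.\<close>
definition m_loo :: "('z \<Rightarrow> 'b \<Rightarrow> real) \<Rightarrow> ('b \<Rightarrow> real) \<Rightarrow> (nat \<Rightarrow> 'z) \<Rightarrow> nat \<Rightarrow> nat \<Rightarrow> 'b \<Rightarrow> real \<Rightarrow> real" where
  "m_loo loss pen z n i \<beta> lam = (1 / real n) * (\<Sum>j\<in>{1..n} - {i}. loss (z j) \<beta>) + lam * pen \<beta>"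

end

theory Submission
  imports Defs
begin

lemma sub_convex:
  fixes f :: "'b::real_inner \<Rightarrow> real"
  assumes "subdifferentiable f" and "0 \<le> t" "t \<le> 1"
  shows "f (b + t *\<^sub>R (x - b)) \<le> (1 - t) * f b + t * f x"
proof -
  let ?w = "b + t *\<^sub>R (x - b)"
  obtain u where u: "u \<in> subdiff f ?w" using assms(1) unfolding subdifferentiable_def by blast
  have A: "\<forall>y. f y \<ge> f ?w + inner u (y - ?w)" using u unfolding subdiff_def by simp
  have 1: "f b \<ge> f ?w + inner u (b - ?w)" and 2: "f x \<ge> f ?w + inner u (x - ?w)"
    using A by blast+
  have e1: "inner u (b - ?w) = - t * inner u (x - b)" by (simp add: inner_diff_right)
  have e2: "inner u (x - ?w) = (1 - t) * inner u (x - b)" by (simp add: inner_diff_right algebra_simps)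
  have "(1 - t) * f b \<ge> (1 - t) * (f ?w - t * inner u (x - b))"
    using 1 e1 assms(3) by (intro mult_left_mono) auto
  moreover have "t * f x \<ge> t * (f ?w + (1 - t) * inner u (x - b))"
    using 2 e2 assms(2) by (intro mult_left_mono) auto
  ultimately show ?thesis by (simp add: algebra_simps)
qed

lemma line_deriv:
  fixes g :: "'b::real_inner \<Rightarrow> real"
  assumes "GDERIV g b :> D"
  shows "((\<lambda>t. (g (b + t *\<^sub>R h) - g b) / t) \<longlongrightarrow> inner D h) (at_right 0)"
proof -
  have g: "(g has_derivative (\<lambda>k. inner k D)) (at (b + 0 *\<^sub>R h))"
    using assms by (simp add: gderiv_def)
  have l: "((\<lambda>t. b + t *\<^sub>R h) has_derivative (\<lambda>t. t *\<^sub>R h)) (at 0)"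
    by (auto intro!: derivative_eq_intros)
  have "((\<lambda>t. g (b + t *\<^sub>R h)) has_derivative (\<lambda>t. inner (t *\<^sub>R h) D)) (at 0)"
    using has_derivative_compose[OF l g] by (simp add: o_def)
  then have "((\<lambda>t. g (b + t *\<^sub>R h)) has_derivative (\<lambda>t. inner h D * t)) (at 0)"
    by (simp add: mult.commute)
  then have "((\<lambda>t. g (b + t *\<^sub>R h)) has_field_derivative inner h D) (at 0)"
    by (simp add: has_field_derivative_def)
  then have "((\<lambda>t. (g (b + t *\<^sub>R h) - g b) / t) \<longlongrightarrow> inner h D) (at 0)"
    by (simp add: DERIV_def)
  then show ?thesis by (simp add: filterlim_at_split inner_commute)
qed

theorem lemma3:
  fixes loss :: "'z \<Rightarrow> 'b::euclidean_space \<Rightarrow> real" and pen :: "'b \<Rightarrow> real"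
    and z :: "nat \<Rightarrow> 'z" and n i :: nat and lam c q :: real
    and bhat bloo D :: 'b
  assumes "lam \<ge> 0" and "i \<in> {1..n}"
    and bhat: "\<forall>\<beta>. m_full loss pen z n bhat lam \<le> m_full loss pen z n \<beta> lam"
    and bloo: "\<forall>\<beta>. m_loo loss pen z n i bloo lam \<le> m_loo loss pen z n i \<beta> lam"
    and diff: "\<forall>\<beta>. loss (z i) differentiable (at \<beta>)"
    and grad: "GDERIV (loss (z i)) bhat :> D"
    and "c > 0" and "q > 0"
    and growth: "gradient_growth (\<lambda>r. c * r powr q) (\<lambda>\<beta>. m_loo loss pen z n i \<beta> lam)"
  shows "norm (bhat - bloo) powr (q - 1) \<le> (1 / real n) * (1 / c) * norm D"
proof -
  define f where "f = (\<lambda>\<beta>. m_loo loss pen z n i \<beta> lam)"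
  define g where "g = loss (z i)"
  have npos: "real n > 0" using assms(2) by auto
  have split: "m_full loss pen z n \<beta> lam = f \<beta> + g \<beta> / real n" for \<beta>
  proof -
    have "{1..n} = insert i ({1..n} - {i})" using assms(2) by auto
    then have "(\<Sum>j\<in>{1..n}. loss (z j) \<beta>) = loss (z i) \<beta> + (\<Sum>j\<in>{1..n} - {i}. loss (z j) \<beta>)"
      by (metis finite_atLeastAtMost finite_Diff sum.insert Diff_iff singletonI)
    then show ?thesis unfolding f_def g_def m_full_def m_loo_def by (simp add: add_divide_distrib)
  qed
  have sd: "subdifferentiable f" using growth unfolding gradient_growth_def f_def by simp
  have gg: "\<forall>x y u v. u \<in> subdiff f y \<longrightarrow> v \<in> subdiff f x \<longrightarrow> c * norm (x - y) powr q \<le> inner (y - x) (u - v)"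
    using growth unfolding gradient_growth_def f_def by simp
  have v0: "0 \<in> subdiff f bloo" using bloo unfolding subdiff_def f_def by simp
  have u0: "- (1 / real n) *\<^sub>R D \<in> subdiff f bhat"
    unfolding subdiff_def
  proof (clarify)
    fix x
    let ?h = "x - bhat"
    have ineq: "f x - f bhat + (g (bhat + t *\<^sub>R ?h) - g bhat) / t / real n \<ge> 0"
      if t: "0 < t" "t \<le> 1" for t
    proof -
      have "f bhat + g bhat / real n \<le> f (bhat + t *\<^sub>R ?h) + g (bhat + t *\<^sub>R ?h) / real n"
        using bhat split by metis
      also have "\<dots> \<le> (1 - t) * f bhat + t * f x + g (bhat + t *\<^sub>R ?h) / real n"
        using sub_convex[OF sd, of t bhat x] t by simp
      finally have "0 \<le> t * (f x - f bhat) + (g (bhat + t *\<^sub>R ?h) - g bhat) / real n"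
        by (simp add: algebra_simps diff_divide_distrib)
      then have "0 \<le> (t * (f x - f bhat) + (g (bhat + t *\<^sub>R ?h) - g bhat) / real n) / t"
        using t by simp
      also have "\<dots> = f x - f bhat + (g (bhat + t *\<^sub>R ?h) - g bhat) / t / real n"
        using t npos by (simp add: field_simps)
      finally show ?thesis .
    qed
    have lim: "((\<lambda>t. f x - f bhat + (g (bhat + t *\<^sub>R ?h) - g bhat) / t / real n) \<longlongrightarrow>
        f x - f bhat + inner D ?h / real n) (at_right 0)"
      using line_deriv[OF grad[folded g_def], of ?h] npos by (intro tendsto_intros) auto
    have ev: "\<forall>\<^sub>F t in at_right 0. 0 \<le> f x - f bhat + (g (bhat + t *\<^sub>R ?h) - g bhat) / t / real n"
      unfolding eventually_at_right_field using ineq by (intro exI[of _ 1]) auto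
    have "0 \<le> f x - f bhat + inner D ?h / real n"
      using tendsto_lowerbound[OF lim ev] by simp
    then show "f bhat + inner (- (1 / real n) *\<^sub>R D) ?h \<le> f x"
      by (simp add: divide_inverse mult.commute)
  qed
  define r where "r = norm (bhat - bloo)"
  have "c * norm (bloo - bhat) powr q \<le> inner (bhat - bloo) (- (1 / real n) *\<^sub>R D - 0)"
    using gg u0 v0 by blast
  also have "\<dots> \<le> r * (norm D / real n)"
  proof -
    have "inner (bhat - bloo) (- (1 / real n) *\<^sub>R D - 0) \<le> norm (bhat - bloo) * norm (- (1 / real n) *\<^sub>R D)"
      by (metis Cauchy_Schwarz_ineq2 abs_le_D1 diff_zero)
    also have "norm (- (1 / real n) *\<^sub>R D) = norm D / real n" using npos by simp
    finally show ?thesis unfolding r_def .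
  qed
  finally have key: "c * r powr q \<le> r * (norm D / real n)"
    by (simp add: r_def norm_minus_commute)
  show ?thesis
  proof (cases "r = 0")
    case True
    then show ?thesis using \<open>c > 0\<close> npos by (simp add: r_def)
  next
    case False
    then have rp: "r > 0" by (simp add: r_def)
    have "r powr q = r powr ((q - 1) + 1)" by simp
    also have "\<dots> = r * r powr (q - 1)" using rp powr_add[of r "q - 1" 1] by (simp add: mult.commute)
    finally have "r * (c * r powr (q - 1)) \<le> r * (norm D / real n)" using key by (simp add: algebra_simps)
    then have "c * r powr (q - 1) \<le> norm D / real n" using rp mult_left_le_imp_le by blast
    then have "r powr (q - 1) \<le> norm D / real n / c" using \<open>c > 0\<close> divide_right_mono[of "c * r powr (q - 1)" "norm D / real n" c] by simp
    then show ?thesis by (simp add: r_def)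
  qed
qed

end
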